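(* Let $\mathbb{E}$ be a finite-dimensional real inner product space and let $f_i:\mathbb{E}\to(-\infty,\infty]$, $i=1,\ldots,M$, be convex, directionally differentiable, continuous on their domains, with $\mathrm{dom} f_i$ closed. Suppose $F(x):=\min_{i\in[M]}f_i(x)$ is continuous on $\mathrm{dom} F$. Then for every $x\in\mathrm{dom} F$ there exists a neighborhood $\mathcal{N}$ of $x$ such that for all $y\in\mathcal{N}\cap\mathrm{dom} F$ we have $y-x\in\mathcal{F}(x;\mathrm{dom} F)$ and $$F(y)\ge F(x)+F'(x;y-x).$$
   Context: $[M]=\{1,\ldots,M\}$; $\mathrm{dom}\, g=\{x\mid g(x)<\infty\}$. For $\mathcal{C}\subset\mathbb{E}$, $x\in\mathbb{E}$: $\mathcal{F}(x;\mathcal{C})=\{d\mid \exists\varsigma'>0:\ x+\varsigma d\in\mathcal{C}\ \forall\varsigma\in(0,\varsigma')\}$ if $x\in\mathcal{C}$, and $\emptyset$ otherwise. $g$ is directionally differentiable if for every $x\in\mathrm{dom}\, g$, $d\in\mathcal{F}(x;\mathrm{dom}\, g)$ the limit $g'(x;d)=\lim_{\varsigma\searrow0}(g(x+\varsigma d)-g(x))/\varsigma$ exists in $\mathbb{R}$. *)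

theory Defs
  imports "HOL-Analysis.Analysis" "HOL-Library.Extended_Real"
begin

text \<open>Extended-real-valued functions on a finite-dimensional real inner product space
  (type class euclidean_space). Values in (-inf, inf] are modelled as ereal values
  different from -inf.\<close>

definition edom :: "('a \<Rightarrow> ereal) \<Rightarrow> 'a set" where
  "edom g = {x. g x < \<infinity>}"

definition feasible_dirs :: "'a::real_vector \<Rightarrow> 'a set \<Rightarrow> 'a set" where
  "feasible_dirs x C = (if x \<in> C then {d. \<exists>s'>0. \<forall>s\<in>{0<..<s'}. x + s *\<^sub>R d \<in> C} else {})"

definition econvex :: "('a::real_vector \<Rightarrow> ereal) \<Rightarrow> bool" where
  "econvex g \<longleftrightarrow> (\<forall>x y. \<forall>t::real. 0 \<le> t \<and> t \<le> 1 \<longrightarrow>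
      g ((1 - t) *\<^sub>R x + t *\<^sub>R y) \<le> ereal (1 - t) * g x + ereal t * g y)"

definition has_dir_deriv :: "('a::real_vector \<Rightarrow> ereal) \<Rightarrow> 'a \<Rightarrow> 'a \<Rightarrow> real \<Rightarrow> bool" where
  "has_dir_deriv g x d L \<longleftrightarrow>
     ((\<lambda>s::real. (g (x + s *\<^sub>R d) - g x) / ereal s) \<longlongrightarrow> ereal L) (at_right 0)"

definition dir_differentiable :: "('a::real_vector \<Rightarrow> ereal) \<Rightarrow> bool" where
  "dir_differentiable g \<longleftrightarrow>
     (\<forall>x\<in>edom g. \<forall>d\<in>feasible_dirs x (edom g). \<exists>L. has_dir_deriv g x d L)"

end

theory Submission
  imports Defs
begin


lemma econvex_dom:
  assumes "econvex g" "\<And>x. g x \<noteq> -\<infinity>" "g x < \<infinity>" "g y < \<infinity>" "0 \<le> t" "t \<le> 1"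
  shows "g (x + t *\<^sub>R (y - x)) < \<infinity>"
proof -
  have e: "x + t *\<^sub>R (y - x) = (1 - t) *\<^sub>R x + t *\<^sub>R y" by (simp add: algebra_simps)
  have "g ((1 - t) *\<^sub>R x + t *\<^sub>R y) \<le> ereal (1 - t) * g x + ereal t * g y"
    using assms(1,5,6) unfolding econvex_def by blast
  also have "\<dots> < \<infinity>" using assms(2,3,4)
    by (cases "g x"; cases "g y") auto
  finally show ?thesis using e by simp
qed

lemma econvex_dd_bound:
  assumes "econvex g" "\<And>x. g x \<noteq> -\<infinity>" "g x < \<infinity>" "g y < \<infinity>"
    and "has_dir_deriv g x (y - x) L"
  shows "g x + ereal L \<le> g y"
proof -
  obtain a where a: "g x = ereal a" using assms(2,3) by (cases "g x") auto
  obtain b where b: "g y = ereal b" using assms(2,4) by (cases "g y") auto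
  have ev: "eventually (\<lambda>s. (g (x + s *\<^sub>R (y - x)) - g x) / ereal s \<le> ereal (b - a)) (at_right (0::real))"
  proof -
    have "eventually (\<lambda>s::real. s \<in> {0<..<1}) (at_right 0)"
      by (simp add: eventually_at_right_field) (auto intro: exI[of _ 1])
    then show ?thesis
    proof (rule eventually_mono)
      fix s :: real assume s: "s \<in> {0<..<1}"
      have fin: "g (x + s *\<^sub>R (y - x)) < \<infinity>" using econvex_dom[OF assms(1,2,3,4), of s] s by auto
      then obtain c where c: "g (x + s *\<^sub>R (y - x)) = ereal c" using assms(2) by (cases "g (x + s *\<^sub>R (y - x))") auto
      have e: "x + s *\<^sub>R (y - x) = (1 - s) *\<^sub>R x + s *\<^sub>R y" by (simp add: algebra_simps)
      have "g ((1 - s) *\<^sub>R x + s *\<^sub>R y) \<le> ereal (1 - s) * g x + ereal s * g y"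
        using assms(1) s unfolding econvex_def by auto
      hence "c \<le> (1 - s) * a + s * b" using a b c e by simp
      hence "c - a \<le> s * (b - a)" by (simp add: algebra_simps)
      hence "(c - a) / s \<le> b - a" using s by (simp add: divide_le_eq mult.commute)
      thus "(g (x + s *\<^sub>R (y - x)) - g x) / ereal s \<le> ereal (b - a)"
        using a c s by simp
    qed
  qed
  have "ereal L \<le> ereal (b - a)"
    using tendsto_le[OF trivial_limit_at_right_real tendsto_const assms(5)[unfolded has_dir_deriv_def] ev] .
  thus ?thesis using a b by simp
qed

lemma tendsto_Min_fin:
  fixes q :: "'i \<Rightarrow> 'b \<Rightarrow> 'c::linorder_topology"
  assumes "finite A" "A \<noteq> {}" "\<And>i. i \<in> A \<Longrightarrow> (q i \<longlongrightarrow> l i) F"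
  shows "((\<lambda>s. Min ((\<lambda>i. q i s) ` A)) \<longlongrightarrow> Min (l ` A)) F"
  using assms
proof (induction A rule: finite_ne_induct)
  case (singleton x) then show ?case by simp
next
  case (insert a B)
  have "((\<lambda>s. min (q a s) (Min ((\<lambda>i. q i s) ` B))) \<longlongrightarrow> min (l a) (Min (l ` B))) F"
    using insert by (intro tendsto_min) auto
  then show ?case using insert by (simp add: Min_insert)
qed

lemma main_aux:
  fixes f :: "nat \<Rightarrow> 'a::euclidean_space \<Rightarrow> ereal" and M :: nat and F :: "'a \<Rightarrow> ereal"
  assumes M: "M \<ge> 1"
    and proper: "\<And>i x. i \<in> {1..M} \<Longrightarrow> f i x \<noteq> -\<infinity>"
    and conv: "\<And>i. i \<in> {1..M} \<Longrightarrow> econvex (f i)"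
    and ddiff: "\<And>i. i \<in> {1..M} \<Longrightarrow> dir_differentiable (f i)"
    and cont: "\<And>i. i \<in> {1..M} \<Longrightarrow> continuous_on (edom (f i)) (f i)"
    and closed: "\<And>i. i \<in> {1..M} \<Longrightarrow> closed (edom (f i))"
    and Fdef: "F = (\<lambda>x. Min ((\<lambda>i. f i x) ` {1..M}))"
    and contF: "continuous_on (edom F) F"
    and x: "x \<in> edom F"
  shows "\<exists>N. open N \<and> x \<in> N \<and>
             (\<forall>y \<in> N \<inter> edom F.
                y - x \<in> feasible_dirs x (edom F) \<and>
                (\<exists>L. has_dir_deriv F x (y - x) L \<and> F y \<ge> F x + ereal L))"
proof -
  define I where "I = {1..M}"
  have finI: "finite I" and neI: "I \<noteq> {}" using M by (auto simp: I_def)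
  have Fle: "F z \<le> f i z" if "i \<in> I" for i z using that finI by (auto simp: Fdef I_def)
  have Fin: "\<exists>i\<in>I. F z = f i z" for z
  proof -
    have "Min ((\<lambda>i. f i z) ` I) \<in> (\<lambda>i. f i z) ` I" using finI neI by (intro Min_in) auto
    thus ?thesis by (auto simp: Fdef I_def)
  qed
  have Fninf: "F z \<noteq> -\<infinity>" for z using Fin[of z] proper unfolding I_def by metis
  obtain r where r: "F x = ereal r" using x Fninf[of x] by (cases "F x") (auto simp: edom_def)
  define A where "A = {i\<in>I. f i x = F x}"
  have sep: "\<exists>e>0. \<forall>y\<in>ball x e \<inter> edom F. F y < f i y" if i: "i \<in> I - A" for i
  proof (cases "f i x < \<infinity>")
    case False
    have "x \<notin> edom (f i)" using False by (simp add: edom_def)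
    moreover have "open (- edom (f i))" using closed[of i] i unfolding I_def by auto
    ultimately obtain e where e: "e > 0" "ball x e \<subseteq> - edom (f i)"
      using open_contains_ball by (metis Compl_iff)
    hence e: "e > 0" "ball x e \<inter> edom (f i) = {}" by auto
    show ?thesis
    proof (intro exI[of _ e] conjI ballI e)
      fix y assume y: "y \<in> ball x e \<inter> edom F"
      hence "f i y = \<infinity>" using e by (auto simp: edom_def)
      thus "F y < f i y" using y by (auto simp: edom_def)
    qed
  next
    case True
    obtain b where b: "f i x = ereal b" using True proper[of i x] i by (cases "f i x") (auto simp: I_def)
    have "F x \<noteq> f i x" using i by (auto simp: A_def)
    hence rb: "r < b" using Fle[of i x] i r b by auto
    define m where "m = (r + b) / 2"
    have "(f i \<longlongrightarrow> f i x) (at x within edom (f i))"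
      using cont[of i] i True by (auto simp: I_def continuous_on_def edom_def)
    hence "eventually (\<lambda>y. ereal m < f i y) (at x within edom (f i))"
      by (rule order_tendstoD) (use b rb m_def in auto)
    then obtain d1 where d1: "d1 > 0" "\<And>y. y \<in> edom (f i) \<Longrightarrow> y \<noteq> x \<Longrightarrow> dist y x < d1 \<Longrightarrow> ereal m < f i y"
      unfolding eventually_at by blast
    have "(F \<longlongrightarrow> F x) (at x within edom F)"
      using contF x by (auto simp: continuous_on_def)
    hence "eventually (\<lambda>y. F y < ereal m) (at x within edom F)"
      by (rule order_tendstoD) (use r rb m_def in auto)
    then obtain d2 where d2: "d2 > 0" "\<And>y. y \<in> edom F \<Longrightarrow> y \<noteq> x \<Longrightarrow> dist y x < d2 \<Longrightarrow> F y < ereal m"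
      unfolding eventually_at by blast
    show ?thesis
    proof (intro exI[of _ "min d1 d2"] conjI ballI)
      show "min d1 d2 > 0" using d1 d2 by simp
      fix y assume y: "y \<in> ball x (min d1 d2) \<inter> edom F"
      show "F y < f i y"
      proof (cases "y = x")
        case True thus ?thesis using r b rb by simp
      next
        case False
        have dy: "dist y x < d1" "dist y x < d2" using y by (auto simp: dist_commute)
        have Fy: "F y < ereal m" using d2(2)[OF _ False dy(2)] y by auto
        show ?thesis
        proof (cases "f i y < \<infinity>")
          case True
          hence "ereal m < f i y" using d1(2)[OF _ False dy(1)] by (simp add: edom_def)
          thus ?thesis using Fy by simp
        next
          case False thus ?thesis using y by (auto simp: edom_def)
        qed
      qed
    qed
  qed
  then obtain e where e: "\<And>i. i \<in> I - A \<Longrightarrow> e i > 0 \<and> (\<forall>y\<in>ball x (e i) \<inter> edom F. F y < f i y)"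
    by metis
  define e0 where "e0 = Min (insert 1 (e ` (I - A)))"
  have e0pos: "e0 > 0" unfolding e0_def using finI e by (subst Min_gr_iff) auto
  have e0le: "e0 \<le> e i" if "i \<in> I - A" for i unfolding e0_def using finI that by (intro Min_le) auto
  define N where "N = ball x e0"
  have act: "\<exists>k\<in>A. f k z = F z" if z: "z \<in> N \<inter> edom F" for z
  proof -
    obtain k where k: "k \<in> I" "F z = f k z" using Fin by blast
    have "k \<in> A"
    proof (rule ccontr)
      assume "k \<notin> A"
      hence "k \<in> I - A" using k by simp
      hence "F z < f k z" using e[of k] e0le[of k] z by (auto simp: N_def)
      thus False using k by simp
    qed
    thus ?thesis using k by auto
  qed
  have AI: "A \<subseteq> I" by (auto simp: A_def)
  have fAx: "f i x = ereal r" if "i \<in> A" for i using that r by (auto simp: A_def)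
  have convI: "econvex (f i)" "\<And>z. f i z \<noteq> -\<infinity>" if "i \<in> I" for i
    using that conv proper by (auto simp: I_def)
  show ?thesis
  proof (intro exI[of _ N] conjI ballI)
    show "open N" "x \<in> N" using e0pos by (auto simp: N_def)
    fix y assume y: "y \<in> N \<inter> edom F"
    define d where "d = y - x"
    obtain j where j: "j \<in> A" "f j y = F y" using act[OF y] by blast
    have jI: "j \<in> I" using j AI by auto
    have fjy: "f j y < \<infinity>" using j y by (auto simp: edom_def)
    have fjx: "f j x < \<infinity>" using fAx[OF j(1)] by simp
    have seg: "f j (x + s *\<^sub>R d) < \<infinity>" if "0 \<le> s" "s \<le> 1" for s
      using econvex_dom[OF convI[OF jI] fjx fjy that] by (simp add: d_def)
    have segF: "x + s *\<^sub>R d \<in> edom F" if "0 \<le> s" "s \<le> 1" for s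
      using seg[OF that] Fle[OF jI, of "x + s *\<^sub>R d"] by (auto simp: edom_def)
    have segN: "x + s *\<^sub>R d \<in> N" if "0 \<le> s" "s \<le> 1" for s
    proof -
      have "dist x (x + s *\<^sub>R d) = s * norm d" using that by (simp add: dist_norm)
      also have "\<dots> \<le> norm d" using that by (simp add: mult_left_le_one_le)
      also have "\<dots> < e0" using y by (simp add: N_def d_def dist_norm norm_minus_commute)
      finally show ?thesis by (simp add: N_def)
    qed
    show "y - x \<in> feasible_dirs x (edom F)"
      unfolding feasible_dirs_def using x segF by (auto simp: d_def[symmetric] intro!: exI[of _ 1])
    define A' where "A' = {i\<in>A. d \<in> feasible_dirs x (edom (f i))}"
    have fdj: "d \<in> feasible_dirs x (edom (f i))" if "i \<in> A" "f i (x + s *\<^sub>R d) < \<infinity>" "0 < s" "s \<le> 1" for i s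
    proof -
      have iI: "i \<in> I" using that AI by auto
      have fix': "f i x < \<infinity>" using fAx[OF that(1)] by simp
      have "f i (x + t *\<^sub>R d) < \<infinity>" if "t \<in> {0<..<s}" for t
      proof -
        have "x + t *\<^sub>R d = x + (t / s) *\<^sub>R ((x + s *\<^sub>R d) - x)" using \<open>0 < s\<close> by simp
        moreover have "f i (x + (t / s) *\<^sub>R ((x + s *\<^sub>R d) - x)) < \<infinity>"
          using econvex_dom[OF convI[OF iI] fix' \<open>f i (x + s *\<^sub>R d) < \<infinity>\<close>, of "t/s"] that \<open>0<s\<close> by auto
        ultimately show ?thesis by metis
      qed
      thus ?thesis unfolding feasible_dirs_def using fix' \<open>0<s\<close> by (auto simp: edom_def)
    qed
    have jA': "j \<in> A'" unfolding A'_def using j(1) fdj[OF j(1) seg[of 1]] by simp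
    have A'A: "A' \<subseteq> A" by (auto simp: A'_def)
    have finA': "finite A'" using A'A AI by (intro finite_subset[OF _ finI]) auto
    have neA': "A' \<noteq> {}" using jA' by auto
    have "\<forall>i\<in>A'. \<exists>L. has_dir_deriv (f i) x d L"
    proof
      fix i assume i: "i \<in> A'"
      hence "i \<in> I" "x \<in> edom (f i)" using A'A AI fAx[of i] by (auto simp: edom_def)
      thus "\<exists>L. has_dir_deriv (f i) x d L" using ddiff[of i] i
        unfolding dir_differentiable_def A'_def I_def by auto
    qed
    then obtain Ld where Ld: "\<And>i. i \<in> A' \<Longrightarrow> has_dir_deriv (f i) x d (Ld i)" by metis
    define L where "L = Min (Ld ` A')"
    have eqev: "eventually (\<lambda>s. Min ((\<lambda>i. (f i (x + s *\<^sub>R d) - f i x) / ereal s) ` A')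
                   = (F (x + s *\<^sub>R d) - F x) / ereal s) (at_right (0::real))"
    proof -
      have "eventually (\<lambda>s::real. s \<in> {0<..<1}) (at_right 0)"
        by (simp add: eventually_at_right_field) (auto intro: exI[of _ 1])
      then show ?thesis
      proof (rule eventually_mono)
        fix s :: real assume s: "s \<in> {0<..<1}"
        define z where "z = x + s *\<^sub>R d"
        have zz: "z \<in> N \<inter> edom F" using segF[of s] segN[of s] s by (auto simp: z_def)
        obtain k where k: "k \<in> A" "f k z = F z" using act[OF zz] by blast
        have kA': "k \<in> A'" unfolding A'_def using k zz fdj[of k s] s
          by (auto simp: z_def edom_def)
        have FzM: "F z = Min ((\<lambda>i. f i z) ` A')"
          using finA' kA' k A'A AI Fle by (intro Min_eqI[symmetric]) (auto intro: image_eqI[of _ _ k])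
        define h where "h = (\<lambda>a::ereal. (a - ereal r) / ereal s)"
        have mh: "mono h" unfolding h_def mono_def
          apply (intro allI impI) subgoal for a b using s by (cases a; cases b) (auto simp: divide_right_mono)
          done
        have "h (F z) = Min (h ` (\<lambda>i. f i z) ` A')"
          unfolding FzM using mono_Min_commute[OF mh] finA' neA' by auto
        also have "\<dots> = Min ((\<lambda>i. (f i z - f i x) / ereal s) ` A')"
          unfolding image_image h_def using fAx A'A by (intro arg_cong[where f=Min] image_cong) auto
        finally show "Min ((\<lambda>i. (f i (x + s *\<^sub>R d) - f i x) / ereal s) ` A') = (F (x + s *\<^sub>R d) - F x) / ereal s"
          by (simp add: h_def z_def r)
      qed
    qed
    have "((\<lambda>s. Min ((\<lambda>i. (f i (x + s *\<^sub>R d) - f i x) / ereal s) ` A')) \<longlongrightarrow> Min ((\<lambda>i. ereal (Ld i)) ` A')) (at_right 0)"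
      using finA' neA' Ld by (intro tendsto_Min_fin) (auto simp: has_dir_deriv_def)
    moreover have "Min ((\<lambda>i. ereal (Ld i)) ` A') = ereal L"
      unfolding L_def using mono_Min_commute[of ereal "Ld ` A'"] finA' neA'
      by (simp add: mono_def image_image)
    ultimately have "has_dir_deriv F x d L"
      unfolding has_dir_deriv_def by (intro iffD1[OF tendsto_cong[OF eqev]]) simp
    moreover have "F x + ereal L \<le> F y"
    proof -
      have "f j x + ereal (Ld j) \<le> f j y"
        using econvex_dd_bound[OF convI[OF jI] fjx fjy] Ld[OF jA'] by (simp add: d_def)
      moreover have "L \<le> Ld j" unfolding L_def using finA' jA' by simp
      moreover have "ereal (r + L) \<le> ereal (r + Ld j)" using \<open>L \<le> Ld j\<close> by simp
      ultimately show ?thesis using j fAx[OF j(1)] r by (simp del: ereal_less_eq)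
    qed
    ultimately show "\<exists>L. has_dir_deriv F x (y - x) L \<and> F x + ereal L \<le> F y"
      by (auto simp: d_def)
  qed
qed



theorem mainTheorem2:
  fixes f :: "nat \<Rightarrow> 'a::euclidean_space \<Rightarrow> ereal" and M :: nat
  assumes M: "M \<ge> 1"
    and proper: "\<And>i x. i \<in> {1..M} \<Longrightarrow> f i x \<noteq> -\<infinity>"
    and conv: "\<And>i. i \<in> {1..M} \<Longrightarrow> econvex (f i)"
    and ddiff: "\<And>i. i \<in> {1..M} \<Longrightarrow> dir_differentiable (f i)"
    and cont: "\<And>i. i \<in> {1..M} \<Longrightarrow> continuous_on (edom (f i)) (f i)"
    and closed: "\<And>i. i \<in> {1..M} \<Longrightarrow> closed (edom (f i))"
    and contF: "continuous_on (edom (\<lambda>x. Min ((\<lambda>i. f i x) ` {1..M})))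
                  (\<lambda>x. Min ((\<lambda>i. f i x) ` {1..M}))"
  shows "\<forall>x \<in> edom (\<lambda>x. Min ((\<lambda>i. f i x) ` {1..M})).
           \<exists>N. open N \<and> x \<in> N \<and>
             (\<forall>y \<in> N \<inter> edom (\<lambda>x. Min ((\<lambda>i. f i x) ` {1..M})).
                y - x \<in> feasible_dirs x (edom (\<lambda>x. Min ((\<lambda>i. f i x) ` {1..M}))) \<and>
                (\<exists>L. has_dir_deriv (\<lambda>x. Min ((\<lambda>i. f i x) ` {1..M})) x (y - x) L \<and>
                     Min ((\<lambda>i. f i y) ` {1..M}) \<ge> Min ((\<lambda>i. f i x) ` {1..M}) + ereal L))"
  unfolding Ball_def[of "edom (\<lambda>x. Min ((\<lambda>i. f i x) ` {1..M}))"]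
proof (intro allI impI)
  fix x assume "x \<in> edom (\<lambda>x. Min ((\<lambda>i. f i x) ` {1..M}))"
  from main_aux[OF M proper conv ddiff cont closed refl contF this]
  show "\<exists>N. open N \<and> x \<in> N \<and>
             (\<forall>y \<in> N \<inter> edom (\<lambda>x. Min ((\<lambda>i. f i x) ` {1..M})).
                y - x \<in> feasible_dirs x (edom (\<lambda>x. Min ((\<lambda>i. f i x) ` {1..M}))) \<and>
                (\<exists>L. has_dir_deriv (\<lambda>x. Min ((\<lambda>i. f i x) ` {1..M})) x (y - x) L \<and>
                     Min ((\<lambda>i. f i y) ` {1..M}) \<ge> Min ((\<lambda>i. f i x) ` {1..M}) + ereal L))"
    by simp
qed

end
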